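(* Let $\mathcal{B}$ be a real Banach space having a pre-dual space $\mathcal{B}_*$, let $\nu_j\in\mathcal{B}_*$, $j\in\mathbb{N}_m$, be linearly independent and let $\mathbf{y}\in\mathbb{R}^m$. Then $\hat f\in\mathcal{B}$ is a solution of the minimum norm interpolation problem with data $\mathbf{y}$ if and only if $\hat f\in\mathcal{M}_{\mathbf{y}}$ and there exist $c_j\in\mathbb{R}$, $j\in\mathbb{N}_m$, such that $$\hat f\in\gamma\,\partial\|\cdot\|_{\mathcal{B}_*}\Big(\sum_{j\in\mathbb{N}_m}c_j\nu_j\Big),\qquad \gamma:=\Big\|\sum_{j\in\mathbb{N}_m}c_j\nu_j\Big\|_{\mathcal{B}_*}.$$
   Context: $\mathcal{B}$ is a real Banach space with dual $\mathcal{B}^*$ and pairing $\langle\nu,f\rangle_{\mathcal{B}}:=\nu(f)$; $\mathbb{N}_m:=\{1,\dots,m\}$; $\mathcal{L}(f):=[\langle\nu_j,f\rangle_{\mathcal{B}}:j\in\mathbb{N}_m]$, $\mathcal{M}_{\mathbf{y}}:=\{f\in\mathcal{B}:\mathcal{L}(f)=\mathbf{y}\}$; a solution of the minimum norm interpolation problem with data $\mathbf{y}$ is an $\hat f\in\mathcal{M}_{\mathbf{y}}$ with $\|\hat f\|_{\mathcal{B}}=\inf\{\|f\|_{\mathcal{B}}:f\in\mathcal{M}_{\mathbf{y}}\}$. A normed space $\mathcal{B}_*$ is a pre-dual space of $\mathcal{B}$ if $(\mathcal{B}_* )^*=\mathcal{B}$; $\mathcal{B}_*$ is regarded as a subspace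 of $\mathcal{B}^*$ via $\langle\nu,f\rangle_{\mathcal{B}}=\langle f,\nu\rangle_{\mathcal{B}_*}=f(\nu)$. For a convex $\phi$ on a real normed space $X$, $\partial\phi(x):=\{\mu\in X^*:\phi(z)-\phi(x)\ge\mu(z-x)\ \forall z\in X\}$; thus $\partial\|\cdot\|_{\mathcal{B}_*}(\nu)\subseteq\mathcal{B}$. *)

theory Defs
  imports "HOL-Analysis.Analysis"
begin

definition subdiff :: "('a::real_normed_vector \<Rightarrow> real) \<Rightarrow> 'a \<Rightarrow> ('a \<Rightarrow>\<^sub>L real) set" where
  "subdiff phi x = {mu. \<forall>z. phi z - phi x \<ge> blinfun_apply mu (z - x)}"

text \<open>B is identified with the dual of its pre-dual 'p through an isometric linear
  bijection J; the pairing of nu in the pre-dual with f in B is (J f) nu.\<close>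
definition predual_iso :: "('b::banach \<Rightarrow> ('p::real_normed_vector \<Rightarrow>\<^sub>L real)) \<Rightarrow> bool" where
  "predual_iso J \<longleftrightarrow> linear J \<and> bij J \<and> (\<forall>f. norm (J f) = norm f)"

definition interp_set ::
  "('b \<Rightarrow> ('p \<Rightarrow>\<^sub>L real)) \<Rightarrow> (nat \<Rightarrow> 'p::real_normed_vector) \<Rightarrow> nat \<Rightarrow> (nat \<Rightarrow> real) \<Rightarrow> 'b set" where
  "interp_set J nu m y = {f. \<forall>j\<in>{1..m}. blinfun_apply (J f) (nu j) = y j}"

definition is_mni_solution ::
  "('b::real_normed_vector \<Rightarrow> ('p::real_normed_vector \<Rightarrow>\<^sub>L real)) \<Rightarrow> (nat \<Rightarrow> 'p) \<Rightarrow> nat \<Rightarrow> (nat \<Rightarrow> real) \<Rightarrow> 'b \<Rightarrow> bool" where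
  "is_mni_solution J nu m y f \<longleftrightarrow>
     f \<in> interp_set J nu m y \<and> norm f = Inf (norm ` interp_set J nu m y)"

end

theory Submission imports Defs begin


definition lrel :: "('a::real_vector \<times> real) set \<Rightarrow> bool" where
 "lrel G \<longleftrightarrow> (0,0) \<in> G \<and> (\<forall>x a y b. (x,a)\<in>G \<longrightarrow> (y,b)\<in>G \<longrightarrow> (x+y,a+b)\<in>G)
    \<and> (\<forall>c x a. (x,a)\<in>G \<longrightarrow> (c*\<^sub>R x, c*a) \<in> G)"

lemma hb_step:
  fixes p :: "'a::real_vector \<Rightarrow> real" and M :: "('a \<times> real) set"
  assumes sub: "\<And>x y. p (x+y) \<le> p x + p y" and pos: "\<And>c x. c \<ge> 0 \<Longrightarrow> p (c *\<^sub>R x) = c * p x"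
    and lM: "lrel M" and dM: "\<forall>(x,a)\<in>M. a \<le> p x"
  shows "\<exists>M'. lrel M' \<and> M \<subseteq> M' \<and> (\<forall>(x,a)\<in>M'. a \<le> p x) \<and> (\<exists>a. (x0,a)\<in>M')"
proof -
  have z: "(0,0) \<in> M" and ad: "\<And>x a y b. (x,a)\<in>M \<Longrightarrow> (y,b)\<in>M \<Longrightarrow> (x+y,a+b)\<in>M"
    and sc: "\<And>c x a. (x,a)\<in>M \<Longrightarrow> (c*\<^sub>R x, c*a) \<in> M" using lM unfolding lrel_def by blast+
  define L where "L = {a - p (u - x0) | u a. (u,a)\<in>M}"
  define c where "c = Sup L"
  have key: "a - p (u - x0) \<le> p (v + x0) - b" if "(u,a)\<in>M" "(v,b)\<in>M" for u a v b
  proof -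
    have "a + b \<le> p (u+v)" using dM ad[OF that] by auto
    also have "p (u+v) \<le> p (u - x0) + p (v + x0)" using sub[of "u-x0" "v+x0"] by simp
    finally show ?thesis by simp
  qed
  have Lne: "L \<noteq> {}" using z unfolding L_def by blast
  have Lbdd: "bdd_above L" unfolding L_def bdd_above_def using key[OF _ z] by blast
  have c1: "a - p (u - x0) \<le> c" if "(u,a)\<in>M" for u a
    unfolding c_def by (rule cSup_upper[OF _ Lbdd]) (use that L_def in blast)
  have c2: "c \<le> p (v + x0) - b" if "(v,b)\<in>M" for v b
    unfolding c_def by (rule cSup_least[OF Lne]) (use that key L_def in blast)
  define M' where "M' = {(u + t *\<^sub>R x0, a + t*c) | u a t. (u,a)\<in>M}"
  have "lrel M'"
    unfolding lrel_def
  proof (intro conjI allI impI)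
    show "(0,0) \<in> M'" unfolding M'_def using z by force
  next
    fix x a y b assume "(x,a)\<in>M'" "(y,b)\<in>M'"
    then obtain u1 a1 t1 u2 a2 t2 where "(u1,a1)\<in>M" "(u2,a2)\<in>M" "x = u1 + t1 *\<^sub>R x0" "a = a1 + t1*c"
      "y = u2 + t2 *\<^sub>R x0" "b = a2 + t2*c" unfolding M'_def by blast
    then show "(x+y,a+b)\<in>M'" unfolding M'_def
      by (intro CollectI exI[of _ "u1+u2"] exI[of _ "a1+a2"] exI[of _ "t1+t2"])
         (auto simp: ad algebra_simps)
  next
    fix r x a assume "(x,a)\<in>M'"
    then obtain u1 a1 t1 where "(u1,a1)\<in>M" "x = u1 + t1 *\<^sub>R x0" "a = a1 + t1*c"
      unfolding M'_def by blast
    then have e: "(r *\<^sub>R x, r*a) = (r *\<^sub>R u1 + (r*t1) *\<^sub>R x0, r*a1 + (r*t1)*c)"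
      by (simp add: algebra_simps)
    have "(r *\<^sub>R u1, r*a1) \<in> M" using sc \<open>(u1,a1)\<in>M\<close> by blast
    then show "(r *\<^sub>R x, r*a)\<in>M'" unfolding M'_def e by blast
  qed
  moreover have "M \<subseteq> M'" unfolding M'_def by force
  moreover have "\<forall>(x,a)\<in>M'. a \<le> p x"
  proof (clarify)
    fix x a assume "(x,a)\<in>M'"
    then obtain u a1 t where uM: "(u,a1)\<in>M" and x: "x = u + t *\<^sub>R x0" and a: "a = a1 + t*c"
      unfolding M'_def by blast
    consider "t > 0" | "t = 0" | "t < 0" by linarith
    then show "a \<le> p x"
    proof cases
      case 1
      have "c \<le> p (inverse t *\<^sub>R u + x0) - inverse t * a1" using c2[OF sc[OF uM, of "inverse t"]] .
      then have "t * c \<le> t * (p (inverse t *\<^sub>R u + x0) - inverse t * a1)" using 1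
        by (intro mult_left_mono) auto
      also have "\<dots> = t * p (inverse t *\<^sub>R u + x0) - a1" using 1 by (simp add: right_diff_distrib)
      also have "t * p (inverse t *\<^sub>R u + x0) = p (t *\<^sub>R (inverse t *\<^sub>R u + x0))" using pos 1 by simp
      also have "t *\<^sub>R (inverse t *\<^sub>R u + x0) = x" using 1 x by (simp add: scaleR_add_right)
      finally show ?thesis using a by simp
    next
      case 2 then show ?thesis using dM uM x a by auto
    next
      case 3
      define s where "s = -t"
      have s: "s > 0" using 3 s_def by simp
      have "inverse s * a1 - p (inverse s *\<^sub>R u - x0) \<le> c" using c1[OF sc[OF uM, of "inverse s"]] .
      then have "s * (inverse s * a1 - p (inverse s *\<^sub>R u - x0)) \<le> s * c" using s
        by (intro mult_left_mono) auto
      then have "a1 - s * p (inverse s *\<^sub>R u - x0) \<le> s * c" using s by (simp add: right_diff_distrib mult.assoc[symmetric])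
      also have "s * p (inverse s *\<^sub>R u - x0) = p (s *\<^sub>R (inverse s *\<^sub>R u - x0))" using pos s by simp
      also have "s *\<^sub>R (inverse s *\<^sub>R u - x0) = x" using s x s_def by (simp add: scaleR_diff_right)
      finally show ?thesis using a s_def by simp
    qed
  qed
  moreover have "(x0, c) \<in> M'" unfolding M'_def using z by force
  ultimately show ?thesis by blast
qed

lemma hahn_banach_graph:
  fixes p :: "'a::real_vector \<Rightarrow> real" and G0 :: "('a \<times> real) set"
  assumes sub: "\<And>x y. p (x+y) \<le> p x + p y" and pos: "\<And>c x. c \<ge> 0 \<Longrightarrow> p (c *\<^sub>R x) = c * p x"
    and l0: "lrel G0" and d0: "\<forall>(x,a)\<in>G0. a \<le> p x"
  shows "\<exists>F. linear F \<and> (\<forall>(x,a)\<in>G0. F x = a) \<and> (\<forall>x. F x \<le> p x)"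
proof -
  define A where "A = {G. G0 \<subseteq> G \<and> lrel G \<and> (\<forall>(x,a)\<in>G. a \<le> p x)}"
  have "\<forall>C\<in>chains A. \<exists>U\<in>A. \<forall>X\<in>C. X \<subseteq> U"
  proof
    fix C assume C: "C \<in> chains A"
    show "\<exists>U\<in>A. \<forall>X\<in>C. X \<subseteq> U"
    proof (cases "C = {}")
      case True then show ?thesis using l0 d0 unfolding A_def by blast
    next
      case False
      then obtain G1 where G1: "G1 \<in> C" by blast
      have CA: "C \<subseteq> A" and ch: "\<And>X Y. X\<in>C \<Longrightarrow> Y\<in>C \<Longrightarrow> X \<subseteq> Y \<or> Y \<subseteq> X"
        using C unfolding chains_def chain_subset_def by auto
      have "\<Union>C \<in> A" unfolding A_def
      proof (intro CollectI conjI)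
        show "G0 \<subseteq> \<Union>C" using G1 CA unfolding A_def by blast
        show "\<forall>(x,a)\<in>\<Union>C. a \<le> p x" using CA unfolding A_def by blast
        show "lrel (\<Union>C)" unfolding lrel_def
        proof (intro conjI allI impI)
          show "(0,0) \<in> \<Union>C" using G1 CA unfolding A_def lrel_def by blast
        next
          fix x a y b assume "(x,a) \<in> \<Union>C" "(y,b) \<in> \<Union>C"
          then obtain X Y where X: "X\<in>C" "(x,a)\<in>X" and Y: "Y\<in>C" "(y,b)\<in>Y" by blast
          from ch[OF X(1) Y(1)] show "(x+y,a+b) \<in> \<Union>C"
          proof
            assume "X \<subseteq> Y" then show ?thesis using X Y CA unfolding A_def lrel_def by blast
          next
            assume "Y \<subseteq> X" then show ?thesis using X Y CA unfolding A_def lrel_def by blast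
          qed
        next
          fix c x a assume "(x,a) \<in> \<Union>C"
          then show "(c *\<^sub>R x, c*a) \<in> \<Union>C" using CA unfolding A_def lrel_def by blast
        qed
      qed
      then show ?thesis by blast
    qed
  qed
  from Zorn_Lemma2[OF this] obtain M where MA: "M \<in> A" and max: "\<And>X. X\<in>A \<Longrightarrow> M \<subseteq> X \<Longrightarrow> X = M"
    by blast
  have lM: "lrel M" and dM: "\<forall>(x,a)\<in>M. a \<le> p x" and G0M: "G0 \<subseteq> M" using MA unfolding A_def by auto
  have z: "(0,0) \<in> M" and ad: "\<And>x a y b. (x,a)\<in>M \<Longrightarrow> (y,b)\<in>M \<Longrightarrow> (x+y,a+b)\<in>M"
    and sc: "\<And>c x a. (x,a)\<in>M \<Longrightarrow> (c*\<^sub>R x, c*a) \<in> M" using lM unfolding lrel_def by blast+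
  have p0: "p 0 = 0" using pos[of 0 0] by simp
  have funM: "a = b" if "(x,a)\<in>M" "(x,b)\<in>M" for x a b
  proof -
    have "(x + (-1) *\<^sub>R x, a + (-1)*b) \<in> M" by (rule ad[OF that(1) sc[OF that(2)]])
    then have "a - b \<le> 0" using dM p0 by auto
    moreover have "(x + (-1) *\<^sub>R x, b + (-1)*a) \<in> M" by (rule ad[OF that(2) sc[OF that(1)]])
    then have "b - a \<le> 0" using dM p0 by auto
    ultimately show ?thesis by simp
  qed
  have tot: "\<exists>a. (x,a)\<in>M" for x
  proof (rule ccontr)
    assume nx: "\<not> ?thesis"
    obtain M' where M': "lrel M'" "M \<subseteq> M'" "\<forall>(x,a)\<in>M'. a \<le> p x" "\<exists>a. (x,a)\<in>M'"
      using hb_step[OF sub pos lM dM] by blast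
    then have "M' \<in> A" using G0M unfolding A_def by blast
    then have "M' = M" using max M'(2) by blast
    then show False using nx M'(4) by blast
  qed
  define F where "F x = (THE a. (x,a)\<in>M)" for x
  have FM: "(x, F x) \<in> M" for x
    unfolding F_def using tot[of x] funM by (metis theI)
  have Feq: "F x = a" if "(x,a)\<in>M" for x a using funM[OF FM that] .
  have "linear F"
  proof (rule linearI)
    fix x y show "F (x+y) = F x + F y" using Feq[OF ad[OF FM FM]] .
  next
    fix c x show "F (c *\<^sub>R x) = c *\<^sub>R F x" using Feq[OF sc[OF FM]] by simp
  qed
  moreover have "\<forall>(x,a)\<in>G0. F x = a" using G0M Feq by blast
  moreover have "\<forall>x. F x \<le> p x" using FM dM by blast
  ultimately show ?thesis by blast
qed

lemma hb_norm:
  fixes g :: "'a::real_normed_vector \<Rightarrow> real" and S :: "'a set"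
  assumes S: "subspace S" and g: "linear g" and s: "s \<ge> 0" and dom: "\<forall>x\<in>S. g x \<le> s * norm x"
  shows "\<exists>\<phi> :: 'a \<Rightarrow>\<^sub>L real. (\<forall>x\<in>S. blinfun_apply \<phi> x = g x) \<and> norm \<phi> \<le> s"
proof -
  define G0 where "G0 = {(x, g x) | x. x \<in> S}"
  have l0: "lrel G0" unfolding lrel_def G0_def using S g
    by (auto simp: subspace_def linear_add linear_scale linear_0)
  have d0: "\<forall>(x,a)\<in>G0. a \<le> s * norm x" using dom unfolding G0_def by auto
  obtain F where F: "linear F" "\<forall>(x,a)\<in>G0. F x = a" "\<forall>x. F x \<le> s * norm x"
  proof -
    have "s * norm (x + y) \<le> s * norm x + s * norm y" for x y :: 'a
      using mult_left_mono[OF norm_triangle_ineq s] by (simp add: distrib_left)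
    then show ?thesis using that hahn_banach_graph[of "\<lambda>x. s * norm x" G0] l0 d0 s by auto
  qed
  have Fa: "\<bar>F x\<bar> \<le> s * norm x" for x
  proof -
    have "- F x = F (-x)" using F(1) by (simp add: linear_neg)
    also have "\<dots> \<le> s * norm x" using F(3)[rule_format, of "-x"] by simp
    finally show ?thesis using F(3)[rule_format, of x] by linarith
  qed
  have bl: "bounded_linear F"
    by (rule bounded_linear_intro[where K=s]) (use F(1) Fa in \<open>auto simp: linear_add linear_scale mult.commute\<close>)
  define \<phi> where "\<phi> = Blinfun F"
  have ap: "blinfun_apply \<phi> = F" unfolding \<phi>_def using bl by (simp add: bounded_linear_Blinfun_apply)
  have "norm \<phi> \<le> s" by (rule norm_blinfun_bound[OF s]) (use Fa ap in auto)
  moreover have "\<forall>x\<in>S. blinfun_apply \<phi> x = g x" using F(2) ap unfolding G0_def by auto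
  ultimately show ?thesis by blast
qed

lemma bw_fin:
  fixes x :: "nat \<Rightarrow> nat \<Rightarrow> real"
  assumes "finite I" "\<And>n j. j\<in>I \<Longrightarrow> \<bar>x n j\<bar> \<le> B"
  shows "\<exists>r c. strict_mono r \<and> (\<forall>j\<in>I. (\<lambda>n. x (r n) j) \<longlonglongrightarrow> c j)"
  using assms
proof (induction I rule: finite_induct)
  case empty
  then show ?case by (intro exI[of _ id]) (auto simp: strict_mono_def)
next
  case (insert a I)
  then obtain r c where r: "strict_mono r" "\<forall>j\<in>I. (\<lambda>n. x (r n) j) \<longlonglongrightarrow> c j" by blast
  have "bounded (range (\<lambda>n. x (r n) a))" using insert.prems
    by (intro boundedI[where B=B]) auto
  then obtain l s where s: "strict_mono s" "((\<lambda>n. x (r n) a) \<circ> s) \<longlonglongrightarrow> l"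
    using bounded_imp_convergent_subsequence by blast
  have "strict_mono (r \<circ> s)" using r(1) s(1) by (rule strict_mono_o)
  moreover have "\<forall>j\<in>insert a I. (\<lambda>n. x ((r \<circ> s) n) j) \<longlonglongrightarrow> (c(a:=l)) j"
  proof
    fix j assume "j \<in> insert a I"
    then consider "j = a" | "j \<in> I" "j \<noteq> a" by blast
    then show "(\<lambda>n. x ((r \<circ> s) n) j) \<longlonglongrightarrow> (c(a:=l)) j"
    proof cases
      case 1 then show ?thesis using s(2) by (simp add: comp_def)
    next
      case 2 then show ?thesis using LIMSEQ_subseq_LIMSEQ[OF r(2)[rule_format, OF 2(1)] s(1)]
        by (simp add: comp_def)
    qed
  qed
  ultimately show ?case by blast
qed



lemma lower_bound:
  fixes nu :: "nat \<Rightarrow> 'p::real_normed_vector"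
  assumes fin: "finite I" and ind: "\<And>c. (\<Sum>j\<in>I. c j *\<^sub>R nu j) = 0 \<Longrightarrow> \<forall>j\<in>I. c j = 0"
  shows "\<exists>\<delta>>0. \<forall>c. \<delta> * (\<Sum>j\<in>I. \<bar>c j\<bar>) \<le> norm (\<Sum>j\<in>I. c j *\<^sub>R nu j)"
proof (rule ccontr)
  define T where "T c = (\<Sum>j\<in>I. c j *\<^sub>R nu j)" for c :: "nat \<Rightarrow> real"
  define N where "N c = (\<Sum>j\<in>I. \<bar>c j\<bar>)" for c :: "nat \<Rightarrow> real"
  assume "\<not> ?thesis"
  then have "\<forall>n. \<exists>c. norm (T c) < (1 / real (Suc n)) * N c"
    unfolding T_def N_def by (metis not_le of_nat_0_less_iff zero_less_Suc divide_pos_pos zero_less_one)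
  then obtain C where C: "\<And>n. norm (T (C n)) < (1 / real (Suc n)) * N (C n)" by metis
  have Npos: "N (C n) > 0" for n
  proof -
    have "0 < (1 / real (Suc n)) * N (C n)" using C[of n] by (smt (verit) norm_ge_zero)
    then show ?thesis by (simp add: zero_less_divide_iff add_pos_nonneg)
  qed
  define D where "D n = (\<lambda>j. C n j / N (C n))" for n
  have TD: "T (D n) = (1 / N (C n)) *\<^sub>R T (C n)" for n
    unfolding T_def D_def by (simp add: scaleR_sum_right divide_inverse mult.commute)
  have ND: "N (D n) = 1" for n
  proof -
    have a: "\<bar>N (C n)\<bar> = N (C n)" using Npos[of n] by simp
    have "N (D n) = (\<Sum>j\<in>I. \<bar>C n j\<bar> / N (C n))" unfolding D_def
      by (subst N_def) (simp add: abs_divide a)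
    also have "\<dots> = N (C n) / N (C n)" by (simp add: sum_divide_distrib[symmetric] N_def)
    finally show ?thesis using Npos[of n] by simp
  qed
  have nTD: "norm (T (D n)) < 1 / real (Suc n)" for n
  proof -
    have "norm (T (D n)) = norm (T (C n)) / N (C n)" using TD Npos[of n] by simp
    also have "\<dots> < 1 / real (Suc n)" using C[of n] Npos[of n] by (simp add: divide_less_eq mult.commute)
    finally show ?thesis .
  qed
  have bd: "\<bar>D n j\<bar> \<le> 1" if "j \<in> I" for n j
  proof -
    have "\<bar>D n j\<bar> \<le> N (D n)" unfolding N_def
      by (rule member_le_sum[OF that _ fin]) auto
    then show ?thesis using ND by simp
  qed
  obtain r e where r: "strict_mono r" "\<forall>j\<in>I. (\<lambda>n. D (r n) j) \<longlonglongrightarrow> e j"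
    using bw_fin[of I D 1] fin bd by blast
  have "(\<lambda>n. T (D (r n))) \<longlonglongrightarrow> T e" unfolding T_def
    by (intro tendsto_sum tendsto_scaleR r(2)[rule_format] tendsto_const)
  moreover have "(\<lambda>n. T (D (r n))) \<longlonglongrightarrow> 0"
  proof -
    have "(\<lambda>n. inverse (real (Suc n))) \<longlonglongrightarrow> 0" by (rule LIMSEQ_inverse_real_of_nat)
    then have "(\<lambda>n. 1 / real (Suc n)) \<longlonglongrightarrow> 0" by (simp add: inverse_eq_divide)
    then have "(\<lambda>n. 1 / real (Suc (r n))) \<longlonglongrightarrow> 0"
      using LIMSEQ_subseq_LIMSEQ[OF _ r(1)] by (simp add: comp_def)
    moreover have "\<forall>\<^sub>F n in sequentially. norm (T (D (r n))) \<le> 1 / real (Suc (r n))"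
      using nTD less_imp_le by (intro always_eventually) blast
    ultimately show ?thesis by (intro Lim_null_comparison[of "\<lambda>n. T (D (r n))" "\<lambda>n. 1 / real (Suc (r n))"])
  qed
  ultimately have "T e = 0" by (rule LIMSEQ_unique)
  then have e0: "\<forall>j\<in>I. e j = 0" using ind unfolding T_def by blast
  have "(\<lambda>n. N (D (r n))) \<longlonglongrightarrow> N e" unfolding N_def
    by (intro tendsto_sum tendsto_rabs r(2)[rule_format])
  then have "N e = 1" using ND by (simp add: LIMSEQ_const_iff)
  moreover have "N e = 0" unfolding N_def using e0 by simp
  ultimately show False by simp
qed

lemma subdiff_props:
  assumes "mu \<in> subdiff norm v"
  shows "blinfun_apply mu v \<ge> norm v" and "norm mu \<le> 1"
proof -
  have h: "\<And>z. norm z - norm v \<ge> blinfun_apply mu (z - v)" using assms unfolding subdiff_def by blast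
  show "blinfun_apply mu v \<ge> norm v" using h[of 0] by (simp add: blinfun.minus_right blinfun.zero_right)
  have le: "blinfun_apply mu w \<le> norm w" for w
  proof -
    have "blinfun_apply mu w \<le> norm (v + w) - norm v" using h[of "v+w"] by simp
    also have "\<dots> \<le> norm w" using norm_triangle_ineq[of v w] by simp
    finally show ?thesis .
  qed
  have "\<bar>blinfun_apply mu w\<bar> \<le> norm w" for w
    using le[of w] le[of "-w"] by (simp add: blinfun.minus_right)
  then show "norm mu \<le> 1" by (intro norm_blinfun_bound) auto
qed

theorem mainTheorem7:
  fixes J :: "'b::banach \<Rightarrow> ('p::real_normed_vector \<Rightarrow>\<^sub>L real)"
    and nu :: "nat \<Rightarrow> 'p" and m :: nat and y :: "nat \<Rightarrow> real" and f :: 'b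
  assumes "predual_iso J"
    and "\<And>c. (\<Sum>j\<in>{1..m}. c j *\<^sub>R nu j) = 0 \<Longrightarrow> \<forall>j\<in>{1..m}. c j = 0"
  shows "is_mni_solution J nu m y f \<longleftrightarrow>
           f \<in> interp_set J nu m y \<and>
           (\<exists>c :: nat \<Rightarrow> real.
              J f \<in> (\<lambda>mu. norm (\<Sum>j\<in>{1..m}. c j *\<^sub>R nu j) *\<^sub>R mu) `
                      subdiff norm (\<Sum>j\<in>{1..m}. c j *\<^sub>R nu j))"
proof -
  define I where "I = {1..m}"
  define T where "T c = (\<Sum>j\<in>I. c j *\<^sub>R nu j)" for c :: "nat \<Rightarrow> real"
  define My where "My = interp_set J nu m y"
  have finI: "finite I" unfolding I_def by simp
  have linJ: "linear J" and bijJ: "bij J" and nJ: "\<And>f. norm (J f) = norm f"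
    using assms(1) unfolding predual_iso_def by auto
  have ind: "\<And>c. T c = 0 \<Longrightarrow> \<forall>j\<in>I. c j = 0" using assms(2) unfolding T_def I_def by blast
  have Tapp: "blinfun_apply \<phi> (T c) = (\<Sum>j\<in>I. c j * blinfun_apply \<phi> (nu j))" for \<phi> c
    unfolding T_def by (simp add: blinfun.sum_right blinfun.scaleR_right)
  have same: "blinfun_apply (J h) (T c) = blinfun_apply (J f) (T c)"
    if "h \<in> My" "f \<in> My" for h c
    using that unfolding My_def interp_set_def Tapp I_def by (intro sum.cong) auto
  have bddMy: "bdd_below (norm ` My)" by (intro bdd_belowI[of _ 0]) auto
  show ?thesis
    unfolding is_mni_solution_def My_def[symmetric] T_def[symmetric] I_def[symmetric]
  proof
    assume "f \<in> My \<and> norm f = Inf (norm ` My)"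
    then have fM: "f \<in> My" and fmin: "norm f = Inf (norm ` My)" by auto
    define g where "g = J f"
    define SS where "SS = {blinfun_apply g (T c) | c. norm (T c) \<le> 1}"
    define s where "s = Sup SS"
    have T0: "T (\<lambda>j. 0) = 0" unfolding T_def by simp
    have SS0: "blinfun_apply g (T (\<lambda>j. 0)) \<in> SS" unfolding SS_def
      by (rule CollectI, rule exI[of _ "\<lambda>j. 0"]) (simp add: T0)
    then have SSne: "SS \<noteq> {}" by blast
    have SSle: "x \<le> norm g" if "x \<in> SS" for x using that unfolding SS_def
    proof (clarify)
      fix c assume "norm (T c) \<le> 1"
      have "blinfun_apply g (T c) \<le> norm g * norm (T c)" using norm_blinfun[of g "T c"] by simp
      also have "\<dots> \<le> norm g" using \<open>norm (T c) \<le> 1\<close> mult_left_le[of "norm (T c)" "norm g"] by simp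
      finally show "blinfun_apply g (T c) \<le> norm g" .
    qed
    have SSbdd: "bdd_above SS" using SSle by (intro bdd_aboveI) auto
    have s0: "s \<ge> 0" unfolding s_def
      using cSup_upper[OF SS0 SSbdd] T0 by (simp add: blinfun.zero_right)
    have sle: "s \<le> norm g" unfolding s_def
      by (rule cSup_least[OF SSne SSle])
    have Tadd: "T c + T d = T (\<lambda>j. c j + d j)" for c d unfolding T_def by (simp add: scaleR_add_left sum.distrib)
    have Tsc: "a *\<^sub>R T c = T (\<lambda>j. a * c j)" for a c unfolding T_def by (simp add: scaleR_sum_right)
    have subT: "subspace (range T)" unfolding subspace_def
      by (auto simp: Tadd Tsc T0[symmetric])
    have dom: "\<forall>x\<in>range T. blinfun_apply g x \<le> s * norm x"
    proof clarify
      fix c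
      show "blinfun_apply g (T c) \<le> s * norm (T c)"
      proof (cases "T c = 0")
        case True then show ?thesis by (simp add: blinfun.zero_right)
      next
        case False
        define t where "t = norm (T c)"
        have t: "t > 0" using False t_def by simp
        have e: "T (\<lambda>j. inverse t * c j) = inverse t *\<^sub>R T c" using Tsc by simp
        have "norm (T (\<lambda>j. inverse t * c j)) \<le> 1" unfolding e using t by (simp add: t_def[symmetric])
        then have "blinfun_apply g (T (\<lambda>j. inverse t * c j)) \<le> s" unfolding s_def
          by (intro cSup_upper[OF _ SSbdd]) (auto simp: SS_def)
        then have "inverse t * blinfun_apply g (T c) \<le> s" unfolding e by (simp add: blinfun.scaleR_right)
        then show ?thesis using t unfolding t_def[symmetric]
          by (simp add: field_simps)
      qed
    qed
    obtain \<phi> where \<phi>: "\<forall>x\<in>range T. blinfun_apply \<phi> x = blinfun_apply g x" "norm \<phi> \<le> s"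
      using hb_norm[OF subT bounded_linear.linear[OF blinfun.bounded_linear_right] s0 dom] by auto
    define h where "h = inv J \<phi>"
    have Jh: "J h = \<phi>" unfolding h_def using bijJ by (simp add: bij_def surj_f_inv_f)
    have nuT: "nu j = T (\<lambda>i. if i = j then 1 else 0)" if "j \<in> I" for j
    proof -
      have "T (\<lambda>i. if i = j then 1 else 0) = (\<Sum>i\<in>I. if i = j then nu i else 0)"
        unfolding T_def by (rule sum.cong) auto
      also have "\<dots> = nu j" using that finI by (simp add: sum.delta)
      finally show ?thesis by simp
    qed
    have fj0: "\<forall>j\<in>I. blinfun_apply (J f) (nu j) = y j"
      using fM unfolding My_def interp_set_def I_def by blast
    have "h \<in> My"
      unfolding My_def interp_set_def I_def[symmetric]
    proof (intro CollectI ballI)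
      fix j assume "j \<in> I"
      then have fj: "blinfun_apply (J f) (nu j) = y j" using fj0 by blast
      then have "blinfun_apply \<phi> (nu j) = blinfun_apply g (nu j)" using \<phi>(1) nuT[OF \<open>j\<in>I\<close>] by (metis rangeI)
      then show "blinfun_apply (J h) (nu j) = y j" unfolding Jh g_def using \<open>j\<in>I\<close> fj by simp
    qed
    then have "norm f \<le> norm h" unfolding fmin by (intro cInf_lower[OF _ bddMy]) auto
    also have "norm h = norm \<phi>" using nJ[of h] Jh by simp
    finally have sg: "s = norm g" using \<phi>(2) sle nJ g_def by simp
    obtain \<delta> where \<delta>: "\<delta> > 0" "\<And>c. \<delta> * (\<Sum>j\<in>I. \<bar>c j\<bar>) \<le> norm (T c)"
      using lower_bound[OF finI, of nu] ind unfolding T_def by blast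
    have "\<forall>n. \<exists>c. norm (T c) \<le> 1 \<and> s - 1 / real (Suc n) < blinfun_apply g (T c)"
    proof
      fix n
      have "s - 1 / real (Suc n) < s" by simp
      then obtain x where "x \<in> SS" "s - 1 / real (Suc n) < x"
        unfolding s_def using less_cSup_iff[OF SSne SSbdd] by blast
      then show "\<exists>c. norm (T c) \<le> 1 \<and> s - 1 / real (Suc n) < blinfun_apply g (T c)"
        unfolding SS_def by blast
    qed
    then obtain C where C: "\<And>n. norm (T (C n)) \<le> 1" "\<And>n. s - 1 / real (Suc n) < blinfun_apply g (T (C n))"
      by metis
    have bd: "\<bar>C n j\<bar> \<le> 1 / \<delta>" if "j \<in> I" for n j
    proof -
      have "\<bar>C n j\<bar> \<le> (\<Sum>j\<in>I. \<bar>C n j\<bar>)" by (rule member_le_sum[OF that _ finI]) auto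
      then have "\<delta> * \<bar>C n j\<bar> \<le> 1" using \<delta>(2)[of "C n"] C(1)[of n] \<delta>(1)
        by (smt (verit) mult_left_mono)
      then show ?thesis using \<delta>(1) by (simp add: field_simps)
    qed
    obtain r e where r: "strict_mono r" "\<forall>j\<in>I. (\<lambda>n. C (r n) j) \<longlonglongrightarrow> e j"
      using bw_fin[of I C "1/\<delta>"] finI bd by blast
    have lT: "(\<lambda>n. T (C (r n))) \<longlonglongrightarrow> T e" unfolding T_def
      by (intro tendsto_sum tendsto_scaleR r(2)[rule_format] tendsto_const)
    have ne: "norm (T e) \<le> 1"
      by (rule LIMSEQ_le_const2[OF tendsto_norm[OF lT]]) (use C(1) in auto)
    have lg: "(\<lambda>n. blinfun_apply g (T (C (r n)))) \<longlonglongrightarrow> blinfun_apply g (T e)"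
      by (intro blinfun.tendsto lT tendsto_const)
    have "(\<lambda>n. inverse (real (Suc n))) \<longlonglongrightarrow> 0" by (rule LIMSEQ_inverse_real_of_nat)
    then have "(\<lambda>n. s - 1 / real (Suc n)) \<longlonglongrightarrow> s - 0"
      by (intro tendsto_diff tendsto_const) (simp add: inverse_eq_divide)
    then have l2: "(\<lambda>n. s - 1 / real (Suc n)) \<longlonglongrightarrow> s" by simp
    have ge: "s - 1 / real (Suc n) \<le> blinfun_apply g (T (C (r n)))" for n
    proof -
      have "n \<le> r n" using r(1) by (rule seq_suble)
      then have "1 / real (Suc (r n)) \<le> 1 / real (Suc n)" by (intro divide_left_mono) auto
      then show ?thesis using C(2)[of "r n"] by linarith
    qed
    have gs: "s \<le> blinfun_apply g (T e)"
      by (rule LIMSEQ_le[OF l2 lg]) (use ge in auto)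
    show "f \<in> My \<and> (\<exists>c. J f \<in> (\<lambda>mu. norm (T c) *\<^sub>R mu) ` subdiff norm (T c))"
    proof (cases "g = 0")
      case True
      have "(0::'p \<Rightarrow>\<^sub>L real) \<in> subdiff norm (T (\<lambda>j. 0))" unfolding subdiff_def T0 by simp
      then have "J f \<in> (\<lambda>mu. norm (T (\<lambda>j. 0)) *\<^sub>R mu) ` subdiff norm (T (\<lambda>j. 0))"
        using True g_def T0 by (intro image_eqI[of _ _ 0]) auto
      then show ?thesis using fM by blast
    next
      case False
      define ng where "ng = norm g"
      have ng: "ng > 0" using False ng_def by simp
      have "blinfun_apply g (T e) \<le> ng * norm (T e)" using norm_blinfun[of g "T e"] ng_def by simp
      also have "\<dots> \<le> ng" using ne ng mult_left_le[of "norm (T e)" ng] by simp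
      finally have gTe: "blinfun_apply g (T e) = ng" using gs sg ng_def by simp
      have "ng \<le> ng * norm (T e)" using norm_blinfun[of g "T e"] gTe ng_def by simp
      then have nTe: "norm (T e) = 1" using ne ng by (smt (verit) mult_le_cancel_left1)
      define c where "c = (\<lambda>j. ng * e j)"
      have Tc: "T c = ng *\<^sub>R T e" unfolding c_def using Tsc by simp
      have nTc: "norm (T c) = ng" using Tc nTe ng by simp
      define mu where "mu = inverse ng *\<^sub>R g"
      have "mu \<in> subdiff norm (T c)" unfolding subdiff_def
      proof (intro CollectI allI)
        fix z
        have "blinfun_apply mu (z - T c) = inverse ng * blinfun_apply g z - inverse ng * (ng * ng)"
          unfolding mu_def Tc using gTe by (simp add: blinfun.diff_right blinfun.scaleR_right blinfun.scaleR_left right_diff_distrib)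
        also have "\<dots> = inverse ng * blinfun_apply g z - ng" using ng by (simp add: field_simps)
        also have "inverse ng * blinfun_apply g z \<le> norm z"
        proof -
          have "blinfun_apply g z \<le> ng * norm z" using norm_blinfun[of g z] ng_def by simp
          then show ?thesis using ng by (simp add: field_simps mult.commute)
        qed
        finally show "blinfun_apply mu (z - T c) \<le> norm z - norm (T c)" using nTc by linarith
      qed
      moreover have "J f = norm (T c) *\<^sub>R mu" unfolding nTc mu_def g_def using ng g_def by simp
      ultimately show ?thesis using fM by blast
    qed
  next
    assume "f \<in> My \<and> (\<exists>c. J f \<in> (\<lambda>mu. norm (T c) *\<^sub>R mu) ` subdiff norm (T c))"
    then obtain c mu where fM: "f \<in> My" and mu: "mu \<in> subdiff norm (T c)" and Jf: "J f = norm (T c) *\<^sub>R mu"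
      by blast
    have lb: "norm f \<le> norm h" if hM: "h \<in> My" for h
    proof (cases "T c = 0")
      case True
      then have "norm f = 0" using nJ[of f] Jf by simp
      then show ?thesis by simp
    next
      case False
      define v where "v = norm (T c)"
      have v: "v > 0" using False v_def by simp
      have "norm f = v * norm mu" using nJ[of f] Jf v_def by simp
      also have "\<dots> \<le> v" using subdiff_props(2)[OF mu] v mult_left_le[of "norm mu" v] by simp
      finally have fv: "norm f \<le> v" .
      have "v * v \<le> v * blinfun_apply mu (T c)" using subdiff_props(1)[OF mu] v v_def by simp
      also have "\<dots> = blinfun_apply (J f) (T c)" using Jf v_def by (simp add: blinfun.scaleR_left)
      also have "\<dots> = blinfun_apply (J h) (T c)" using same[OF hM fM] by simp
      also have "\<dots> \<le> norm (J h) * v" using norm_blinfun[of "J h" "T c"] v_def by simp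
      finally have "v \<le> norm (J h)" using v by (simp add: mult.commute)
      then show ?thesis using fv nJ[of h] by simp
    qed
    have "Inf (norm ` My) = norm f" by (rule cInf_eq_minimum) (use fM lb in auto)
    then show "f \<in> My \<and> norm f = Inf (norm ` My)" using fM by simp
  qed
qed


end
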